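(* Let $n\ge 1$. For any code $C_n\in\mathbb{S}_n$ with codeword lengths $l_1,\dots,l_n$, there exist an integer $m\le\sum_{i=1}^n(l_i-1)$ (in particular $m=O(n^2)$) and symmetric fix-free codes $S_n^{(1)},\dots,S_n^{(m)}\in\mathbb{S}_n$ such that $R_n=S_n^{(0)}\rightarrow S_n^{(1)}\rightarrow\cdots\rightarrow S_n^{(m)}=C_n$, and such that for each $i\in\{0,1,\dots,m-1\}$ every codeword of $C_n$ has a prefix in $S_n^{(i)}$. Furthermore, there exist codes $B_n\in\mathbb{S}_n$ for which any such sequence from $R_n$ to $B_n$ requires $m=\Omega(n^{1.5})$ codes.
   Context: All strings are finite binary strings; $|w|$ denotes length. A palindrome is a string equal to its reversal. A symmetric fix-free code is a finite set of binary palindromes no one of which is a proper prefix of another. $\mathbb{S}_n$ is the set of symmetric fix-free codes with exactly $n$ codewords which do not contain the string $1$ and all of whose codewords have length at most $n$. $R_n=\{s_1,\dots,s_n\}$ with $s_1=0$ and $s_i=1\,0^{i-2}\,1$ for $2\le i\le n$ (so $|s_i|=i$). For a palindrome $\sigma$, $\mathcal{N}(\sigma)$ is the set of palindromes $w$ such that $\sigma$ is the longest palindrome that is a proper prefix of $w$, and $\mathcal{N}_n(\sigma)=\{w\in\mathcal{N}(\sigma):|w|\le n\}$. For $S,\hat S\in\mathbb{S}_n$, write $S\rightarrow\hat S$ if there is $\sigma\in S$ with $\hat S\subseteq (S\cup\mathcal{N}_n(\sigma))\setminus\{\sigma\}$. "Prefix" includes equality. *)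

theory Defs
  imports Complex_Main "HOL-Library.Sublist"
begin

text \<open>Binary strings are bool lists: False = 0, True = 1.\<close>

definition palindrome :: "bool list \<Rightarrow> bool" where
  "palindrome w \<longleftrightarrow> rev w = w"

definition sym_fixfree :: "bool list set \<Rightarrow> bool" where
  "sym_fixfree S \<longleftrightarrow> finite S \<and> (\<forall>w\<in>S. palindrome w \<and> w \<noteq> [])
     \<and> (\<forall>u\<in>S. \<forall>v\<in>S. \<not> strict_prefix u v)"

definition SS :: "nat \<Rightarrow> bool list set set" where
  "SS n = {S. sym_fixfree S \<and> card S = n \<and> [True] \<notin> S \<and> (\<forall>w\<in>S. length w \<le> n)}"

definition R :: "nat \<Rightarrow> bool list set" where
  "R n = {[False]} \<union> {[True] @ replicate (i - 2) False @ [True] | i. 2 \<le> i \<and> i \<le> n}"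

definition Nset :: "bool list \<Rightarrow> bool list set" where
  "Nset \<sigma> = {w. palindrome w \<and> palindrome \<sigma> \<and> strict_prefix \<sigma> w \<and>
      (\<forall>\<tau>. palindrome \<tau> \<and> strict_prefix \<tau> w \<longrightarrow> length \<tau> \<le> length \<sigma>)}"

definition Nset_n :: "nat \<Rightarrow> bool list \<Rightarrow> bool list set" where
  "Nset_n n \<sigma> = {w \<in> Nset \<sigma>. length w \<le> n}"

definition step :: "nat \<Rightarrow> bool list set \<Rightarrow> bool list set \<Rightarrow> bool" where
  "step n S S' \<longleftrightarrow> (\<exists>\<sigma>\<in>S. S' \<subseteq> (S \<union> Nset_n n \<sigma>) - {\<sigma>})"

definition good_seq :: "nat \<Rightarrow> bool list set \<Rightarrow> nat \<Rightarrow> (nat \<Rightarrow> bool list set) \<Rightarrow> bool" where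
  "good_seq n C m Sq \<longleftrightarrow> Sq 0 = R n \<and> Sq m = C
     \<and> (\<forall>i. 1 \<le> i \<and> i \<le> m \<longrightarrow> Sq i \<in> SS n)
     \<and> (\<forall>i<m. step n (Sq i) (Sq (Suc i)))
     \<and> (\<forall>i<m. \<forall>c\<in>C. \<exists>s\<in>Sq i. prefix s c)"

end

theory Submission imports Defs "HOL-Library.Discrete_Functions" begin


lemma repl_prefix:
  "prefix (replicate a False @ True # xs) (replicate a' False @ True # ys) \<Longrightarrow> a = a' \<and> prefix xs ys"
proof (induction a arbitrary: a')
  case 0 then show ?case by (cases a') auto
next
  case (Suc a) then show ?case by (cases a') auto
qed

definition rw :: "nat \<Rightarrow> bool list" where
  "rw i = [True] @ replicate (i - 2) False @ [True]"

lemma R_eq: "R n = {[False]} \<union> rw ` {2..n}"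
  unfolding R_def rw_def by auto

lemma R_SS: assumes "n \<ge> 1" shows "R n \<in> SS n"
proof -
  have inj: "inj_on rw {2..n}"
    by (rule inj_onI) (metis (no_types, lifting) atLeastAtMost_iff diff_add_inverse2 le_add_diff_inverse2 length_append length_replicate list.size(3,4) rw_def add_2_eq_Suc' append_Cons append_Nil)
  have nf: "[False] \<notin> rw ` {2..n}" by (auto simp: rw_def)
  have card: "card (R n) = n"
    unfolding R_eq using nf inj assms by (simp add: card_image)
  have pal: "\<forall>w\<in>R n. palindrome w \<and> w \<noteq> []"
    unfolding R_eq palindrome_def rw_def by auto
  have ff: "\<forall>u\<in>R n. \<forall>v\<in>R n. \<not> strict_prefix u v"
  proof (intro ballI notI)
    fix u v assume u: "u \<in> R n" and v: "v \<in> R n" and sp: "strict_prefix u v"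
    show False
    proof (cases "u = [False]")
      case True
      then show ?thesis using v sp unfolding R_eq rw_def by auto
    next
      case False
      then obtain i where i: "u = rw i" using u unfolding R_eq by auto
      show ?thesis
      proof (cases "v = [False]")
        case True then show ?thesis using sp i by (auto simp: rw_def)
      next
        case False
        then obtain j where j: "v = rw j" using v unfolding R_eq by auto
        have "prefix (True # (replicate (i-2) False @ True # [])) (True # (replicate (j-2) False @ True # []))"
          using sp i j unfolding rw_def by (metis strict_prefix_def append_Cons append_Nil)
        then have "prefix (replicate (i-2) False @ True # []) (replicate (j-2) False @ True # [])"
          by simp
        then have "i - 2 = j - 2" by (rule repl_prefix[THEN conjunct1])
        then have "u = v" using i j by (simp add: rw_def)
        then show False using sp by simp
      qed
    qed
  qed
  have len: "\<forall>w\<in>R n. length w \<le> n" using assms unfolding R_eq rw_def by auto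
  have nt: "[True] \<notin> R n" unfolding R_eq rw_def by auto
  show ?thesis unfolding SS_def mem_Collect_eq
  proof -
    have "finite (R n)" unfolding R_eq by simp
    then show "sym_fixfree (R n) \<and> card (R n) = n \<and> [True] \<notin> R n \<and> (\<forall>w\<in>R n. length w \<le> n)"
      unfolding sym_fixfree_def using card pal ff len nt by blast
  qed
qed

lemma R_cover:
  assumes "palindrome c" "c \<noteq> []" "c \<noteq> [True]" "length c \<le> n"
  shows "\<exists>\<rho>\<in>R n. prefix \<rho> c"
proof (cases c)
  case Nil then show ?thesis using assms by simp
next
  case (Cons x rest)
  show ?thesis
  proof (cases x)
    case False
    then show ?thesis using Cons unfolding R_def by auto
  next
    case True
    have rne: "rest \<noteq> []" using assms Cons True by auto
    have "last c = hd c" using assms(1,2) unfolding palindrome_def by (metis hd_rev)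
    then have "last rest = True" using Cons True rne by simp
    then have "True \<in> set rest" using rne last_in_set by metis
    then obtain ys zs where yz: "rest = ys @ True # zs" "True \<notin> set ys"
      using split_list_first by metis
    have ys0: "ys = replicate (length ys) False"
      using yz(2) by (metis (full_types) replicate_length_same)
    obtain k where ys: "ys = replicate k False" using ys0 by blast
    have "prefix ([True] @ replicate (length ys + 2 - 2) False @ [True]) c"
    proof -
      have "c = ([True] @ ys @ [True]) @ zs" using Cons True yz by simp
      then have "prefix ([True] @ ys @ [True]) c" unfolding prefix_def by blast
      then show ?thesis using ys by simp
    qed
    moreover have "length ys = k" using ys by simp
    moreover have "length ys + 2 \<le> n" using assms(4) Cons yz by simp
    ultimately have "length ys + 2 \<le> n" "prefix ([True] @ replicate (length ys + 2 - 2) False @ [True]) c" by auto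
    then show ?thesis unfolding R_def by (intro bexI[of _ "[True] @ replicate (length ys + 2 - 2) False @ [True]"] UnI2 CollectI) (auto intro: exI[of _ "length ys + 2"])
  qed
qed

lemma prefix_take_eq: "prefix p c \<Longrightarrow> take (length p) c = p"
  by (metis append_eq_conv_conj prefix_def)

lemma child_exists:
  assumes "palindrome c" "strict_prefix \<sigma> c" "palindrome \<sigma>"
  shows "\<exists>w\<in>Nset \<sigma>. prefix w c"
proof -
  define L where "L = {k. length \<sigma> < k \<and> k \<le> length c \<and> palindrome (take k c)}"
  have lc: "length c \<in> L" unfolding L_def using assms prefix_length_less by auto
  define k where "k = (LEAST k. k \<in> L)"
  have kL: "k \<in> L" unfolding k_def using lc by (rule LeastI)
  have kmin: "\<And>j. j \<in> L \<Longrightarrow> k \<le> j" unfolding k_def by (rule Least_le)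
  define w where "w = take k c"
  have lw: "length w = k" using kL unfolding L_def w_def by auto
  have wc: "prefix w c" unfolding w_def by (rule take_is_prefix)
  have sp: "prefix \<sigma> w"
    using prefix_length_prefix[of \<sigma> c w] assms(2) wc lw kL unfolding L_def by auto
  have "\<sigma> \<noteq> w" using lw kL unfolding L_def by auto
  then have ssp: "strict_prefix \<sigma> w" using sp by (simp add: prefix_order.le_less)
  have "w \<in> Nset \<sigma>"
    unfolding Nset_def
  proof (intro CollectI conjI allI impI)
    show "palindrome w" using kL unfolding L_def w_def by auto
    show "palindrome \<sigma>" by (rule assms(3))
    show "strict_prefix \<sigma> w" by (rule ssp)
    fix \<tau> assume t: "palindrome \<tau> \<and> strict_prefix \<tau> w"
    then have tc: "prefix \<tau> c" using wc by (meson prefix_order.dual_order.strict_implies_order prefix_order.trans)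
    have ltw: "length \<tau> < k" using t lw prefix_length_less by blast
    show "length \<tau> \<le> length \<sigma>"
    proof (rule ccontr)
      assume "\<not> length \<tau> \<le> length \<sigma>"
      then have "length \<tau> \<in> L" unfolding L_def using t tc prefix_take_eq[OF tc] prefix_length_le[OF tc] by auto
      then show False using kmin ltw by fastforce
    qed
  qed
  then show ?thesis using wc by blast
qed

definition Pot :: "bool list set \<Rightarrow> bool list set \<Rightarrow> bool list set" where
  "Pot C S = {p. palindrome p \<and> (\<exists>c\<in>C. strict_prefix p c) \<and> (\<exists>s\<in>S. prefix s p)}"

definition Inv :: "nat \<Rightarrow> bool list set \<Rightarrow> bool list set \<Rightarrow> bool" where
  "Inv n C S \<longleftrightarrow> S \<in> SS n \<and> (\<forall>c\<in>C. \<exists>s\<in>S. prefix s c)"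

lemma Pot_finite: "finite C \<Longrightarrow> finite (Pot C S)"
proof -
  assume f: "finite C"
  have "Pot C S \<subseteq> (\<Union>c\<in>C. set (prefixes c))" unfolding Pot_def by auto
  moreover have "finite (\<Union>c\<in>C. set (prefixes c))" using f by simp
  ultimately show ?thesis by (rule finite_subset)
qed

lemma step_exists:
  assumes C: "C \<in> SS n" and I: "Inv n C S" and ne: "S \<noteq> C"
  shows "\<exists>S'. Inv n C S' \<and> step n S S' \<and> Pot C S' \<subset> Pot C S"
proof -
  have S: "S \<in> SS n" and cov: "\<forall>c\<in>C. \<exists>s\<in>S. prefix s c" using I unfolding Inv_def by auto
  have Sff: "sym_fixfree S" and cS: "card S = n" and Sn1: "[True] \<notin> S" and Sl: "\<forall>w\<in>S. length w \<le> n"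
    using S unfolding SS_def by auto
  have Cff: "sym_fixfree C" and cC: "card C = n" and Cl: "\<forall>w\<in>C. length w \<le> n"
    using C unfolding SS_def by auto
  have finS: "finite S" and palS: "\<forall>w\<in>S. palindrome w \<and> w \<noteq> []" and acS: "\<forall>u\<in>S. \<forall>v\<in>S. \<not> strict_prefix u v"
    using Sff unfolding sym_fixfree_def by auto
  have finC: "finite C" and palC: "\<forall>w\<in>C. palindrome w \<and> w \<noteq> []" and acC: "\<forall>u\<in>C. \<forall>v\<in>C. \<not> strict_prefix u v"
    using Cff unfolding sym_fixfree_def by auto
  obtain \<sigma> c0 where \<sigma>S: "\<sigma> \<in> S" and c0C: "c0 \<in> C" and spc0: "strict_prefix \<sigma> c0"
  proof -
    show thesis
    proof (rule ccontr)
      assume na: "\<not> thesis"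
      have "\<forall>s\<in>S. \<forall>c\<in>C. \<not> strict_prefix s c" using na that by blast
      then have "C \<subseteq> S"
      proof -
        assume h: "\<forall>s\<in>S. \<forall>c\<in>C. \<not> strict_prefix s c"
        show "C \<subseteq> S"
        proof
          fix c assume cC: "c \<in> C"
          then obtain s where "s \<in> S" "prefix s c" using cov by blast
          moreover have "\<not> strict_prefix s c" using h cC \<open>s \<in> S\<close> by blast
          ultimately show "c \<in> S" by (simp add: prefix_order.le_less)
        qed
      qed
      then have "C = S" using finS cS cC card_subset_eq by metis
      then show False using ne by simp
    qed
  qed
  have pal\<sigma>: "palindrome \<sigma>" and ne\<sigma>: "\<sigma> \<noteq> []" using palS \<sigma>S by auto
  define D where "D = {w \<in> Nset \<sigma>. \<exists>c\<in>C. prefix w c}"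
  define G where "G = {s \<in> S. \<exists>c\<in>C. prefix s c}"
  define G' where "G' = (G - {\<sigma>}) \<union> D"
  have Dsp: "\<And>w. w \<in> D \<Longrightarrow> strict_prefix \<sigma> w \<and> palindrome w" unfolding D_def Nset_def by auto
  have Dmax: "\<And>w \<tau>. w \<in> D \<Longrightarrow> palindrome \<tau> \<Longrightarrow> strict_prefix \<tau> w \<Longrightarrow> length \<tau> \<le> length \<sigma>"
    unfolding D_def Nset_def by auto
  have ac: "\<forall>u\<in>(S-{\<sigma>}) \<union> D. \<forall>v\<in>(S-{\<sigma>}) \<union> D. \<not> strict_prefix u v"
  proof (intro ballI notI)
    fix u v assume u: "u \<in> (S-{\<sigma>}) \<union> D" and v: "v \<in> (S-{\<sigma>}) \<union> D" and uv: "strict_prefix u v"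
    show False
    proof (cases "u \<in> D")
      case uD: True
      show False
      proof (cases "v \<in> D")
        case True
        have "length u \<le> length \<sigma>" using Dmax[OF True _ uv] Dsp[OF uD] by auto
        moreover have "length \<sigma> < length u" using Dsp[OF uD] prefix_length_less by blast
        ultimately show False by simp
      next
        case False
        then have "v \<in> S" "v \<noteq> \<sigma>" using v by auto
        moreover have "strict_prefix \<sigma> v" using Dsp[OF uD] uv by (meson prefix_order.less_trans)
        ultimately show False using acS \<sigma>S by blast
      qed
    next
      case uD: False
      then have uS: "u \<in> S" "u \<noteq> \<sigma>" using u by auto
      show False
      proof (cases "v \<in> D")
        case True
        have "prefix u v" "prefix \<sigma> v" using uv Dsp[OF True] by auto
        then have "prefix u \<sigma> \<or> prefix \<sigma> u" by (rule prefix_same_cases)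
        then have "strict_prefix u \<sigma> \<or> strict_prefix \<sigma> u" using uS(2) by auto
        then show False using acS \<sigma>S uS by blast
      next
        case False
        then have "v \<in> S" using v by auto
        then show False using acS uS uv by blast
      qed
    qed
  qed
  have G'pre: "\<forall>x\<in>G'. \<exists>c\<in>C. prefix x c" unfolding G'_def G_def D_def by auto
  have finD: "finite D"
  proof -
    have "D \<subseteq> (\<Union>c\<in>C. set (prefixes c))" unfolding D_def by auto
    then show ?thesis using finC by (simp add: finite_subset)
  qed
  have finG: "finite G" unfolding G_def using finS by simp
  have finG': "finite G'" unfolding G'_def using finG finD by simp
  have G'sub: "G' \<subseteq> (S-{\<sigma>}) \<union> D" unfolding G'_def G_def by auto
  have cardG': "card G' \<le> n"
  proof -
    obtain f where f: "\<forall>x\<in>G'. f x \<in> C \<and> prefix x (f x)" using G'pre by metis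
    have "inj_on f G'"
    proof (rule inj_onI)
      fix x y assume x: "x \<in> G'" and y: "y \<in> G'" and fxy: "f x = f y"
      have "prefix x (f x)" "prefix y (f x)" using f x y fxy by auto
      then have "prefix x y \<or> prefix y x" by (rule prefix_same_cases)
      then show "x = y" using ac G'sub x y by (metis in_mono prefix_order.le_less)
    qed
    moreover have "f ` G' \<subseteq> C" using f by auto
    ultimately show ?thesis using card_inj_on_le finC cC by metis
  qed
  have Dne: "D \<noteq> {}"
  proof -
    obtain w where "w \<in> Nset \<sigma>" "prefix w c0" using child_exists[OF _ spc0 pal\<sigma>] palC c0C by blast
    then show ?thesis unfolding D_def using c0C by blast
  qed
  have DS: "D \<inter> S = {}"
  proof -
    have "\<And>w. w \<in> D \<Longrightarrow> w \<notin> S" using Dsp acS \<sigma>S by blast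
    then show ?thesis by blast
  qed
  have \<sigma>G: "\<sigma> \<in> G" unfolding G_def using \<sigma>S c0C spc0 using prefix_order.less_imp_le by blast
  have cardG'2: "card G' = card G - 1 + card D"
  proof -
    have "(G - {\<sigma>}) \<inter> D = {}" using DS unfolding G_def by auto
    then have "card G' = card (G - {\<sigma>}) + card D" unfolding G'_def using finG finD card_Un_disjoint by (metis finite_Diff)
    then show ?thesis using \<sigma>G finG by simp
  qed
  have GS: "G \<subseteq> S" unfolding G_def by auto
  have cSG: "card (S - G) = n - card G" using finS GS cS card_Diff_subset[of G S] finG by simp
  have cD1: "card D \<ge> 1" using Dne finD by (simp add: Suc_leI card_gt_0_iff)
  have cG1: "card G \<ge> 1" using \<sigma>G finG by (metis One_nat_def Suc_leI card_gt_0_iff empty_iff)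
  have "card G \<le> card G'" using cardG'2 cD1 cG1 by simp
  then have "n - card G' \<le> card (S - G)" using cSG by simp
  then obtain F where FS: "F \<subseteq> S - G" and cF: "card F = n - card G'" and finF: "finite F"
    by (rule obtain_subset_with_card_n)
  define S' where "S' = G' \<union> F"
  have G'F: "G' \<inter> F = {}" using FS G'pre unfolding G_def by auto
  have cS': "card S' = n" unfolding S'_def using card_Un_disjoint[OF finG' finF G'F] cF cardG' by simp
  have S'sub: "S' \<subseteq> (S-{\<sigma>}) \<union> D" using G'sub FS \<sigma>G unfolding S'_def by auto
  have DN: "D \<subseteq> Nset_n n \<sigma>"
  proof
    fix w assume w: "w \<in> D"
    then obtain c where "c \<in> C" "prefix w c" unfolding D_def by auto
    then have "length w \<le> n" using Cl prefix_length_le by fastforce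
    then show "w \<in> Nset_n n \<sigma>" using w unfolding D_def Nset_n_def by auto
  qed
  have stp: "step n S S'"
    unfolding step_def
  proof (rule bexI[OF _ \<sigma>S])
    show "S' \<subseteq> S \<union> Nset_n n \<sigma> - {\<sigma>}" using S'sub DN Dsp by auto
  qed
  have palS': "\<forall>w\<in>S'. palindrome w \<and> w \<noteq> []" using S'sub palS Dsp by fastforce
  have acS': "\<forall>u\<in>S'. \<forall>v\<in>S'. \<not> strict_prefix u v" using S'sub ac by blast
  have finS': "finite S'" unfolding S'_def using finG' finF by simp
  have nt: "[True] \<notin> S'"
  proof
    assume "[True] \<in> S'"
    then have "[True] \<in> D" using S'sub Sn1 by auto
    then have "strict_prefix \<sigma> [True]" using Dsp by auto
    then show False using ne\<sigma> prefix_length_less by fastforce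
  qed
  have lS': "\<forall>w\<in>S'. length w \<le> n" using S'sub Sl DN unfolding Nset_n_def by auto
  have S'SS: "S' \<in> SS n" unfolding SS_def sym_fixfree_def using finS' palS' acS' cS' nt lS' by blast
  have covS': "\<forall>c\<in>C. \<exists>s\<in>S'. prefix s c"
  proof
    fix c assume cC: "c \<in> C"
    then obtain s where sS: "s \<in> S" and sc: "prefix s c" using cov by blast
    show "\<exists>s\<in>S'. prefix s c"
    proof (cases "s = \<sigma>")
      case False
      then have "s \<in> G'" unfolding G'_def G_def using sS sc cC by auto
      then show ?thesis using sc unfolding S'_def by blast
    next
      case True
      have "\<sigma> \<noteq> c"
      proof
        assume "\<sigma> = c"
        then show False using acC cC c0C spc0 by blast
      qed
      then have "strict_prefix \<sigma> c" using sc True by auto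
      then obtain w where "w \<in> Nset \<sigma>" "prefix w c" using child_exists[OF _ _ pal\<sigma>] palC cC by blast
      then have "w \<in> D" unfolding D_def using cC by blast
      then show ?thesis using \<open>prefix w c\<close> unfolding S'_def G'_def by blast
    qed
  qed
  have PotS: "Pot C S' \<subseteq> Pot C S"
  proof
    fix p assume "p \<in> Pot C S'"
    then obtain s' where p: "palindrome p" "\<exists>c\<in>C. strict_prefix p c" and s': "s' \<in> S'" "prefix s' p"
      unfolding Pot_def by blast
    have "\<exists>s\<in>S. prefix s p"
    proof (cases "s' \<in> S")
      case True then show ?thesis using s' by blast
    next
      case False
      then have "s' \<in> D" using S'sub s' by auto
      then have "prefix \<sigma> p" using Dsp s' by (meson prefix_order.dual_order.strict_implies_order prefix_order.trans)
      then show ?thesis using \<sigma>S by blast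
    qed
    then show "p \<in> Pot C S" using p unfolding Pot_def by blast
  qed
  have \<sigma>Pot: "\<sigma> \<in> Pot C S" unfolding Pot_def using pal\<sigma> c0C spc0 \<sigma>S by blast
  have \<sigma>Pot': "\<sigma> \<notin> Pot C S'"
  proof
    assume "\<sigma> \<in> Pot C S'"
    then obtain s' where s': "s' \<in> S'" "prefix s' \<sigma>" unfolding Pot_def by blast
    show False
    proof (cases "s' \<in> D")
      case True
      then have "length \<sigma> < length s'" using Dsp prefix_length_less by blast
      then show False using s' prefix_length_le by fastforce
    next
      case False
      then have "s' \<in> S" "s' \<noteq> \<sigma>" using S'sub s' by auto
      then have "strict_prefix s' \<sigma>" using s' by auto
      then show False using acS \<sigma>S \<open>s' \<in> S\<close> by blast
    qed
  qed
  have "Pot C S' \<subset> Pot C S" using PotS \<sigma>Pot \<sigma>Pot' by blast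
  moreover have "Inv n C S'" unfolding Inv_def using S'SS covS' by blast
  ultimately show ?thesis using stp by blast
qed

lemma chain:
  assumes C: "C \<in> SS n"
  shows "Inv n C S \<Longrightarrow> \<exists>m Sq. m \<le> card (Pot C S) \<and> Sq 0 = S \<and> Sq m = C \<and> (\<forall>i\<le>m. Sq i \<in> SS n)
     \<and> (\<forall>i<m. step n (Sq i) (Sq (Suc i))) \<and> (\<forall>i<m. \<forall>c\<in>C. \<exists>s\<in>Sq i. prefix s c)"
proof (induction "card (Pot C S)" arbitrary: S rule: less_induct)
  case less
  have SSS: "S \<in> SS n" and covS: "\<forall>c\<in>C. \<exists>s\<in>S. prefix s c" using less.prems unfolding Inv_def by auto
  show ?case
  proof (cases "S = C")
    case True
    then show ?thesis using SSS by (intro exI[of _ 0] exI[of _ "\<lambda>_. C"]) auto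
  next
    case False
    obtain S' where S': "Inv n C S'" "step n S S'" "Pot C S' \<subset> Pot C S"
      using step_exists[OF C less.prems False] by blast
    have finC: "finite C" using C unfolding SS_def sym_fixfree_def by auto
    have lt: "card (Pot C S') < card (Pot C S)" using S'(3) Pot_finite[OF finC] psubset_card_mono by blast
    note ih = less.hyps[OF lt S'(1)]
    obtain m Sq where IH: "m \<le> card (Pot C S')" "Sq 0 = S'" "Sq m = C" "\<forall>i\<le>m. Sq i \<in> SS n"
       "\<forall>i<m. step n (Sq i) (Sq (Suc i))" "\<forall>i<m. \<forall>c\<in>C. \<exists>s\<in>Sq i. prefix s c"
      using ih by blast
    define Sq' where "Sq' = (\<lambda>i. if i = 0 then S else Sq (i - 1))"
    have "Suc m \<le> card (Pot C S)" using IH(1) \<open>card (Pot C S') < card (Pot C S)\<close> by simp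
    moreover have "Sq' 0 = S" "Sq' (Suc m) = C" using IH unfolding Sq'_def by auto
    moreover have "\<forall>i\<le>Suc m. Sq' i \<in> SS n" using IH(4) SSS unfolding Sq'_def by auto
    moreover have "\<forall>i<Suc m. step n (Sq' i) (Sq' (Suc i))"
    proof (intro allI impI)
      fix i assume "i < Suc m"
      then show "step n (Sq' i) (Sq' (Suc i))" using IH(2,5) S'(2) unfolding Sq'_def
        by (cases i) auto
    qed
    moreover have "\<forall>i<Suc m. \<forall>c\<in>C. \<exists>s\<in>Sq' i. prefix s c"
    proof (intro allI impI)
      fix i assume "i < Suc m"
      then show "\<forall>c\<in>C. \<exists>s\<in>Sq' i. prefix s c" using IH(6) covS unfolding Sq'_def
        by (cases i) auto
    qed
    ultimately show ?thesis by blast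
  qed
qed

lemma strict_pref_card: "card {p. strict_prefix p c \<and> p \<noteq> []} \<le> length c - 1"
proof -
  have "{p. strict_prefix p c \<and> p \<noteq> []} \<subseteq> (\<lambda>k. take k c) ` {1..<length c}"
  proof
    fix p assume p: "p \<in> {p. strict_prefix p c \<and> p \<noteq> []}"
    then have "p = take (length p) c" using prefix_take_eq[of p c] by auto
    moreover have "length p < length c" "length p \<ge> 1"
      using p prefix_length_less by (auto simp: Suc_leI)
    ultimately show "p \<in> (\<lambda>k. take k c) ` {1..<length c}" by force
  qed
  then have "card {p. strict_prefix p c \<and> p \<noteq> []} \<le> card ((\<lambda>k. take k c) ` {1..<length c})"
    by (rule card_mono[rotated]) simp
  also have "\<dots> \<le> card {1..<length c}" by (rule card_image_le) simp
  finally show ?thesis by simp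
qed

lemma Pot_bound:
  assumes "finite C" "\<forall>s\<in>S. s \<noteq> []"
  shows "card (Pot C S) \<le> (\<Sum>w\<in>C. length w - 1)"
proof -
  have "Pot C S \<subseteq> (\<Union>c\<in>C. {p. strict_prefix p c \<and> p \<noteq> []})"
    unfolding Pot_def using assms(2) by auto
  then have "card (Pot C S) \<le> card (\<Union>c\<in>C. {p. strict_prefix p c \<and> p \<noteq> []})"
  proof (rule card_mono[rotated])
    show "finite (\<Union>c\<in>C. {p. strict_prefix p c \<and> p \<noteq> []})"
    proof (rule finite_UN_I[OF assms(1)])
      fix c show "finite {p. strict_prefix p c \<and> p \<noteq> []}"
        by (rule finite_subset[of _ "set (prefixes c)"]) auto
    qed
  qed
  also have "\<dots> \<le> (\<Sum>c\<in>C. card {p. strict_prefix p c \<and> p \<noteq> []})"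
    by (rule card_UN_le[OF assms(1)])
  also have "\<dots> \<le> (\<Sum>w\<in>C. length w - 1)"
    by (rule sum_mono) (rule strict_pref_card)
  finally show ?thesis .
qed

lemma part1: "\<forall>n\<ge>1. \<forall>C\<in>SS n. \<exists>m Sq. m \<le> (\<Sum>w\<in>C. length w - 1) \<and> good_seq n C m Sq"
proof (intro allI impI ballI)
  fix n C assume n: "n \<ge> 1" and C: "C \<in> SS n"
  have RS: "R n \<in> SS n" using R_SS[OF n] .
  have IR: "Inv n C (R n)" unfolding Inv_def
  proof (intro conjI RS ballI)
    fix c assume "c \<in> C"
    then have "palindrome c" "c \<noteq> []" "c \<noteq> [True]" "length c \<le> n"
      using C unfolding SS_def sym_fixfree_def by auto
    then show "\<exists>s\<in>R n. prefix s c" by (rule R_cover)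
  qed
  then obtain m Sq where m: "m \<le> card (Pot C (R n))" "Sq 0 = R n" "Sq m = C" "\<forall>i\<le>m. Sq i \<in> SS n"
       "\<forall>i<m. step n (Sq i) (Sq (Suc i))" "\<forall>i<m. \<forall>c\<in>C. \<exists>s\<in>Sq i. prefix s c"
    using chain[OF C IR] by blast
  have "card (Pot C (R n)) \<le> (\<Sum>w\<in>C. length w - 1)"
  proof (rule Pot_bound)
    show "finite C" using C unfolding SS_def sym_fixfree_def by auto
    show "\<forall>s\<in>R n. s \<noteq> []" using RS unfolding SS_def sym_fixfree_def by auto
  qed
  then show "\<exists>m Sq. m \<le> (\<Sum>w\<in>C. length w - 1) \<and> good_seq n C m Sq"
    using m unfolding good_seq_def by (intro exI[of _ m] exI[of _ Sq]) simp
qed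



definition blk :: "nat \<Rightarrow> nat \<Rightarrow> bool list" where
  "blk a b = replicate a False @ True # replicate b False @ [True]"

definition wd :: "nat \<Rightarrow> nat \<Rightarrow> nat \<Rightarrow> bool list" where
  "wd a b j = concat (replicate j (blk a b)) @ replicate a False"

lemma wd_Suc: "wd a b (Suc j) = replicate a False @ True # replicate b False @ True # wd a b j"
  by (simp add: wd_def blk_def)

lemma wd_0: "wd a b 0 = replicate a False" by (simp add: wd_def)

lemma len_wd: "length (wd a b j) = j * (a + b + 2) + a"
  by (induction j) (simp_all add: wd_0 wd_Suc)

lemma rot: "x @ concat (replicate j (y @ x)) = concat (replicate j (x @ y)) @ x"
  by (induction j) auto

lemma pal_wd: "palindrome (wd a b j)"
proof -
  let ?x = "replicate a False" and ?y = "True # replicate b False @ [True]"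
  have blk: "blk a b = ?x @ ?y" by (simp add: blk_def)
  have r: "rev (?x @ ?y) = ?y @ ?x" by simp
  have "rev (concat (replicate j (?x @ ?y))) = concat (replicate j (rev (?x @ ?y)))"
    by (simp add: rev_concat)
  then have "rev (concat (replicate j (?x @ ?y))) = concat (replicate j (?y @ ?x))"
    using r by metis
  then have "rev (wd a b j) = ?x @ concat (replicate j (?y @ ?x))"
    unfolding wd_def blk by simp
  also have "\<dots> = wd a b j" unfolding wd_def blk by (rule rot)
  finally show ?thesis unfolding palindrome_def .
qed

lemma wd_prefix_mono: "prefix (wd a b j) (wd a b (j + d))"
proof (induction j)
  case 0
  then show ?case by (cases d) (simp_all add: wd_0 wd_Suc)
next
  case (Suc j)
  then show ?case by (simp add: wd_Suc)
qed

lemma wd_inj: "prefix (wd a b (Suc j)) (wd a' b' (Suc j')) \<Longrightarrow> a = a' \<and> b = b'"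
proof -
  assume "prefix (wd a b (Suc j)) (wd a' b' (Suc j'))"
  then have "prefix (replicate a False @ True # (replicate b False @ True # wd a b j))
                    (replicate a' False @ True # (replicate b' False @ True # wd a' b' j'))"
    by (simp add: wd_Suc)
  then have 1: "a = a'" and "prefix (replicate b False @ True # wd a b j) (replicate b' False @ True # wd a' b' j')"
    using repl_prefix by blast+
  then have "b = b'" using repl_prefix by blast
  then show ?thesis using 1 by simp
qed

lemma wd_False: "a \<ge> 1 \<Longrightarrow> prefix [False] (wd a b j)"
proof -
  assume a: "a \<ge> 1"
  have "prefix (replicate a False) (wd a b j)" by (cases j) (simp_all add: wd_0 wd_Suc)
  moreover have "prefix [False] (replicate a False)" using a by (cases a) auto
  ultimately show ?thesis using prefix_order.trans by blast
qed

lemma lower: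
  assumes n: "n \<ge> 1" and g: "good_seq n B m Sq" and finE: "finite E"
    and E: "\<forall>\<tau>\<in>E. palindrome \<tau> \<and> (\<exists>b\<in>B. strict_prefix \<tau> b) \<and> (\<exists>\<rho>\<in>R n. prefix \<rho> \<tau>)"
  shows "card E \<le> m"
proof -
  have S0: "Sq 0 = R n" and Sm: "Sq m = B" and st: "\<forall>i<m. step n (Sq i) (Sq (Suc i))"
    using g unfolding good_seq_def by auto
  have "\<forall>i. \<exists>s. i < m \<longrightarrow> s \<in> Sq i \<and> Sq (Suc i) \<subseteq> (Sq i \<union> Nset_n n s) - {s}"
    using st unfolding step_def by blast
  then obtain \<sigma> where \<sigma>: "\<And>i. i < m \<Longrightarrow> \<sigma> i \<in> Sq i \<and> Sq (Suc i) \<subseteq> (Sq i \<union> Nset_n n (\<sigma> i)) - {\<sigma> i}"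
    by metis
  have acR: "\<forall>u\<in>R n. \<forall>v\<in>R n. \<not> strict_prefix u v"
    using R_SS[OF n] unfolding SS_def sym_fixfree_def by auto
  have key: "\<forall>w\<in>Sq j. \<forall>\<tau>. palindrome \<tau> \<and> strict_prefix \<tau> w \<and> (\<exists>\<rho>\<in>R n. prefix \<rho> \<tau>) \<longrightarrow> \<tau> \<in> \<sigma> ` {..<j}"
    if "j \<le> m" for j
    using that
  proof (induction j)
    case 0
    show ?case
    proof (intro ballI allI impI)
      fix w \<tau> assume w: "w \<in> Sq 0" and t: "palindrome \<tau> \<and> strict_prefix \<tau> w \<and> (\<exists>\<rho>\<in>R n. prefix \<rho> \<tau>)"
      then obtain \<rho> where "\<rho> \<in> R n" "prefix \<rho> \<tau>" by blast
      then have "strict_prefix \<rho> w" using t by (meson prefix_order.le_less_trans)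
      then show "\<tau> \<in> \<sigma> ` {..<0}" using acR w S0 \<open>\<rho> \<in> R n\<close> by blast
    qed
  next
    case (Suc j)
    have jm: "j < m" using Suc.prems by simp
    have IH: "\<forall>w\<in>Sq j. \<forall>\<tau>. palindrome \<tau> \<and> strict_prefix \<tau> w \<and> (\<exists>\<rho>\<in>R n. prefix \<rho> \<tau>) \<longrightarrow> \<tau> \<in> \<sigma> ` {..<j}"
      using Suc.IH Suc.prems by simp
    have sub: "\<sigma> ` {..<j} \<subseteq> \<sigma> ` {..<Suc j}" by auto
    show ?case
    proof (intro ballI allI impI)
      fix w \<tau> assume w: "w \<in> Sq (Suc j)" and t: "palindrome \<tau> \<and> strict_prefix \<tau> w \<and> (\<exists>\<rho>\<in>R n. prefix \<rho> \<tau>)"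
      show "\<tau> \<in> \<sigma> ` {..<Suc j}"
      proof (cases "w \<in> Sq j")
        case True
        then show ?thesis using IH t sub by blast
      next
        case False
        then have wN: "w \<in> Nset (\<sigma> j)" using w \<sigma>[OF jm] unfolding Nset_n_def by auto
        then have l: "length \<tau> \<le> length (\<sigma> j)" and sw: "strict_prefix (\<sigma> j) w"
          using t unfolding Nset_def by auto
        have "prefix \<tau> (\<sigma> j)"
          using prefix_length_prefix[of \<tau> w "\<sigma> j"] t sw l by auto
        then have "\<tau> = \<sigma> j \<or> strict_prefix \<tau> (\<sigma> j)" by (auto simp: prefix_order.le_less)
        then show ?thesis
        proof
          assume "\<tau> = \<sigma> j" then show ?thesis by auto
        next
          assume "strict_prefix \<tau> (\<sigma> j)"
          then show ?thesis using IH \<sigma>[OF jm] t sub by blast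
        qed
      qed
    qed
  qed
  have km: "\<forall>w\<in>Sq m. \<forall>\<tau>. palindrome \<tau> \<and> strict_prefix \<tau> w \<and> (\<exists>\<rho>\<in>R n. prefix \<rho> \<tau>) \<longrightarrow> \<tau> \<in> \<sigma> ` {..<m}"
    using key[of m] by simp
  have "E \<subseteq> \<sigma> ` {..<m}"
  proof
    fix x assume "x \<in> E"
    then obtain b where "palindrome x" "b \<in> B" "strict_prefix x b" "\<exists>\<rho>\<in>R n. prefix \<rho> x" using E by blast
    then show "x \<in> \<sigma> ` {..<m}" using km Sm by blast
  qed
  then have "card E \<le> card (\<sigma> ` {..<m})" by (rule card_mono[rotated]) simp
  also have "\<dots> \<le> m" using card_image_le[of "{..<m}" \<sigma>] by simp
  finally show ?thesis .
qed

lemma arith_q: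
  fixes s n :: nat
  assumes s: "s \<ge> 20" and sn: "s^2 \<le> n"
  shows "s + 13 \<le> 6 * (n div (2*s+4))"
proof (rule ccontr)
  define d where "d = 2*s+4"
  define q where "q = n div d"
  assume "\<not> s + 13 \<le> 6 * (n div (2*s+4))"
  then have "6 * (q+1) \<le> s + 18" unfolding q_def d_def by simp
  then have 1: "6 * (q+1) * d \<le> (s+18) * d" by (rule mult_right_mono) simp
  have d0: "d > 0" by (simp add: d_def)
  have e1: "q*d + n mod d = n" unfolding q_def by (rule div_mult_mod_eq)
  have e2: "n mod d < d" using d0 by simp
  have e3: "(q+1)*d = q*d + d" by simp
  have "n < (q+1) * d" using e1 e2 e3 by linarith
  then have "6 * n < (s+18) * d" using 1 by linarith
  then have "6 * (s*s) < (s+18)*(2*s+4)" using sn unfolding d_def power2_eq_square by linarith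
  then have 2: "4 * (s*s) < 40 * s + 72" by (simp add: algebra_simps)
  have "20 * s \<le> s * s" using s by simp
  then show False using 2 s by linarith
qed

lemma constr:
  assumes n400: "n \<ge> 400"
  shows "\<exists>B\<in>SS n. \<exists>E. finite E \<and> n * (n div (2 * floor_sqrt n + 4) - 2) \<le> card E
     \<and> (\<forall>\<tau>\<in>E. palindrome \<tau> \<and> (\<exists>b\<in>B. strict_prefix \<tau> b) \<and> (\<exists>\<rho>\<in>R n. prefix \<rho> \<tau>))"
proof -
  define s where "s = floor_sqrt n"
  define t where "t = s + 1"
  define q where "q = n div (2*s+4)"
  define K where "K = q - 1"
  have s20: "s \<ge> 20" unfolding s_def using n400 by (intro le_floor_sqrtI) simp
  have sn: "s^2 \<le> n" unfolding s_def by simp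
  have nt: "n < t * t" unfolding t_def s_def using Suc_floor_sqrt_power2_gt[of n] by (simp add: power2_eq_square)
  have q6: "s + 13 \<le> 6 * q" unfolding q_def by (rule arith_q[OF s20 sn])
  have K1: "K \<ge> 1" using q6 s20 unfolding K_def by linarith
  have t0: "t > 0" unfolding t_def by simp
  define A where "A i = i div t + 1" for i
  define Bf where "Bf i = i mod t + 1" for i
  have At: "\<And>i. i < n \<Longrightarrow> A i \<le> t"
  proof -
    fix i assume "i < n"
    then have "i < t * t" using nt by simp
    then have "i div t < t" using t0 by (simp add: div_less_iff_less_mult)
    then show "A i \<le> t" unfolding A_def by simp
  qed
  have Bt: "\<And>i. Bf i \<le> t" unfolding Bf_def using t0 by (simp add: Suc_leI)
  have A1: "\<And>i. A i \<ge> 1" "\<And>i. Bf i \<ge> 1" unfolding A_def Bf_def by auto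
  have ABinj: "\<And>i i'. A i = A i' \<Longrightarrow> Bf i = Bf i' \<Longrightarrow> i = i'"
  proof -
    fix i i' assume "A i = A i'" "Bf i = Bf i'"
    then have "i div t = i' div t" "i mod t = i' mod t" unfolding A_def Bf_def by auto
    then show "i = i'" by (metis div_mult_mod_eq)
  qed
  define B where "B = (\<lambda>i. wd (A i) (Bf i) K) ` {..<n}"
  obtain K0 where K0: "K = Suc K0" using K1 by (cases K) auto
  have injB: "inj_on (\<lambda>i. wd (A i) (Bf i) K) {..<n}"
  proof (rule inj_onI)
    fix i i' assume "i \<in> {..<n}" "i' \<in> {..<n}" "wd (A i) (Bf i) K = wd (A i') (Bf i') K"
    then have "prefix (wd (A i) (Bf i) (Suc K0)) (wd (A i') (Bf i') (Suc K0))" using K0 by simp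
    then have "A i = A i' \<and> Bf i = Bf i'" by (rule wd_inj)
    then show "i = i'" using ABinj by blast
  qed
  have cardB: "card B = n" unfolding B_def using injB by (simp add: card_image)
  have lenB: "\<forall>w\<in>B. length w \<le> n"
  proof
    fix w assume "w \<in> B"
    then obtain i where i: "i < n" "w = wd (A i) (Bf i) K" unfolding B_def by auto
    have "length w = K * (A i + Bf i + 2) + A i" using i len_wd by simp
    also have "\<dots> \<le> K * (2*s+4) + (2*s+4)"
    proof -
      have "A i + Bf i + 2 \<le> 2*s+4" using At[OF i(1)] Bt[of i] unfolding t_def by simp
      then have "K * (A i + Bf i + 2) \<le> K * (2*s+4)" by (rule mult_left_mono) simp
      moreover have "A i \<le> 2*s+4" using At[OF i(1)] unfolding t_def by simp
      ultimately show ?thesis by simp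
    qed
    also have "\<dots> = q * (2*s+4)"
    proof -
      have qK: "q = K + 1" using K1 unfolding K_def by simp
      show ?thesis unfolding qK by (simp add: algebra_simps)
    qed
    also have "\<dots> \<le> n" unfolding q_def by simp
    finally show "length w \<le> n" .
  qed
  have FB: "\<forall>w\<in>B. prefix [False] w" unfolding B_def using A1 wd_False by auto
  have BSS: "B \<in> SS n"
    unfolding SS_def sym_fixfree_def
  proof (intro CollectI conjI ballI)
    show "finite B" unfolding B_def by simp
    show "card B = n" by (rule cardB)
    fix w assume w: "w \<in> B"
    show "palindrome w" using w pal_wd unfolding B_def by auto
    show "w \<noteq> []" using FB w by auto
    show "length w \<le> n" using lenB w by auto
  next
    show "[True] \<notin> B" using FB by auto
  next
    fix u v assume u: "u \<in> B" and v: "v \<in> B"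
    show "\<not> strict_prefix u v"
    proof
      assume sp: "strict_prefix u v"
      obtain i where i: "u = wd (A i) (Bf i) K" using u unfolding B_def by auto
      obtain i' where i': "v = wd (A i') (Bf i') K" using v unfolding B_def by auto
      have "prefix (wd (A i) (Bf i) (Suc K0)) (wd (A i') (Bf i') (Suc K0))" using sp i i' K0 by simp
      then have "A i = A i' \<and> Bf i = Bf i'" by (rule wd_inj)
      then have "u = v" using i i' by simp
      then show False using sp by simp
    qed
  qed
  define E where "E = (\<lambda>(i,j). wd (A i) (Bf i) j) ` ({..<n} \<times> {1..<K})"
  have injE: "inj_on (\<lambda>(i,j). wd (A i) (Bf i) j) ({..<n} \<times> {1..<K})"
  proof (rule inj_onI, clarify)
    fix i j i' j' assume ij: "j \<in> {1..<K}" "j' \<in> {1..<K}" and eq: "wd (A i) (Bf i) j = wd (A i') (Bf i') j'"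
    obtain j0 where j0: "j = Suc j0" using ij by (cases j) auto
    obtain j0' where j0': "j' = Suc j0'" using ij by (cases j') auto
    have "prefix (wd (A i) (Bf i) (Suc j0)) (wd (A i') (Bf i') (Suc j0'))" using eq j0 j0' by simp
    then have ab: "A i = A i' \<and> Bf i = Bf i'" by (rule wd_inj)
    then have "j * (A i + Bf i + 2) + A i = j' * (A i + Bf i + 2) + A i"
      using arg_cong[OF eq, of length] len_wd by simp
    then have "j * (A i + Bf i + 2) = j' * (A i + Bf i + 2)" by (rule add_right_imp_eq)
    then have "j = j'" using mult_right_cancel[of "A i + Bf i + 2" j j'] by linarith
    then show "i = i' \<and> j = j'" using ab ABinj by blast
  qed
  have cardE: "card E = n * (K - 1)" unfolding E_def using injE by (simp add: card_image card_cartesian_product)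
  have "K - 1 = q - 2" unfolding K_def by (simp add: diff_diff_left)
  then have eqK: "n * (n div (2 * floor_sqrt n + 4) - 2) = n * (K - 1)" unfolding q_def s_def by simp
  have cE: "n * (n div (2 * floor_sqrt n + 4) - 2) \<le> card E" unfolding eqK cardE by (rule order_refl)
  have Eprop: "\<forall>\<tau>\<in>E. palindrome \<tau> \<and> (\<exists>b\<in>B. strict_prefix \<tau> b) \<and> (\<exists>\<rho>\<in>R n. prefix \<rho> \<tau>)"
  proof
    fix \<tau> assume "\<tau> \<in> E"
    then obtain i j where ij: "i < n" "1 \<le> j" "j < K" and \<tau>: "\<tau> = wd (A i) (Bf i) j" unfolding E_def by auto
    have bB: "wd (A i) (Bf i) K \<in> B" unfolding B_def using ij by auto
    have "prefix \<tau> (wd (A i) (Bf i) (j + (K - j)))" unfolding \<tau> by (rule wd_prefix_mono)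
    then have p: "prefix \<tau> (wd (A i) (Bf i) K)" using ij by simp
    have "j * (A i + Bf i + 2) < K * (A i + Bf i + 2)" using ij by (intro mult_strict_right_mono) auto
    then have "length \<tau> < length (wd (A i) (Bf i) K)" unfolding \<tau> len_wd by linarith
    then have "strict_prefix \<tau> (wd (A i) (Bf i) K)" using p by (auto simp: prefix_order.le_less)
    moreover have "[False] \<in> R n" unfolding R_def by simp
    moreover have "prefix [False] \<tau>" unfolding \<tau> using A1 wd_False by auto
    ultimately show "palindrome \<tau> \<and> (\<exists>b\<in>B. strict_prefix \<tau> b) \<and> (\<exists>\<rho>\<in>R n. prefix \<rho> \<tau>)"
      using bB pal_wd \<tau> by blast
  qed
  show ?thesis using BSS cE Eprop unfolding E_def by (intro bexI[OF _ BSS] exI[of _ E]) (auto simp: E_def)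
qed

lemma powr15: "real n powr 1.5 = real n * sqrt (real n)"
proof -
  have e: "(1.5::real) = 1 + 1/2" by simp
  have "real n powr 1.5 = real n powr 1 * real n powr (1/2)"
    unfolding e by (rule powr_add)
  also have "\<dots> = real n * sqrt (real n)"
    by (cases "n = 0") (simp_all add: powr_half_sqrt)
  finally show ?thesis .
qed

lemma part2: "\<exists>c::real. c > 0 \<and> (\<exists>N. \<forall>n\<ge>N. \<exists>B\<in>SS n.
          \<forall>m Sq. good_seq n B m Sq \<longrightarrow> c * real n powr 1.5 \<le> real m)"
proof (intro exI[of _ "1/6"] conjI exI[of _ 400] allI impI)
  show "(0::real) < 1/6" by simp
  fix n :: nat assume n: "n \<ge> 400"
  obtain B E where B: "B \<in> SS n" and finE: "finite E"
     and cE: "n * (n div (2 * floor_sqrt n + 4) - 2) \<le> card E"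
     and E: "\<forall>\<tau>\<in>E. palindrome \<tau> \<and> (\<exists>b\<in>B. strict_prefix \<tau> b) \<and> (\<exists>\<rho>\<in>R n. prefix \<rho> \<tau>)"
    using constr[OF n] by blast
  define s where "s = floor_sqrt n"
  define q where "q = n div (2*s+4)"
  have s20: "s \<ge> 20" unfolding s_def using n by (intro le_floor_sqrtI) simp
  have q6: "s + 13 \<le> 6 * q" unfolding q_def s_def by (rule arith_q) (use s20 in \<open>simp_all add: s_def\<close>)
  have q2: "s + 1 \<le> 6 * (q - 2)" using q6 by linarith
  have ns: "real n < (real s + 1)^2"
  proof -
    have "n < (Suc s)^2" unfolding s_def by (rule Suc_floor_sqrt_power2_gt)
    then have "real n < real ((Suc s)^2)" by linarith
    then show ?thesis by (simp add: add.commute)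
  qed
  have sq: "sqrt (real n) \<le> real s + 1"
  proof -
    have "sqrt (real n) \<le> sqrt ((real s + 1)^2)" using ns by (intro real_sqrt_le_mono) simp
    also have "\<dots> = real s + 1" by (rule real_sqrt_abs[THEN trans]) simp
    finally show ?thesis .
  qed
  show "\<exists>B\<in>SS n. \<forall>m Sq. good_seq n B m Sq \<longrightarrow> 1/6 * real n powr 1.5 \<le> real m"
  proof (intro bexI[OF _ B] allI impI)
    fix m Sq assume g: "good_seq n B m Sq"
    have "card E \<le> m" using lower[OF _ g finE E] n by simp
    then have m1: "n * (q - 2) \<le> m" using cE unfolding q_def s_def by simp
    have "real n * sqrt (real n) \<le> real n * (real s + 1)" using sq by (intro mult_left_mono) auto
    also have "\<dots> \<le> real n * (6 * real (q - 2))"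
    proof -
      have "real s + 1 \<le> 6 * real (q - 2)" using q2 by linarith
      then show ?thesis by (intro mult_left_mono) auto
    qed
    also have "\<dots> = 6 * real (n * (q - 2))" by simp
    also have "\<dots> \<le> 6 * real m" using m1 by (simp only: of_nat_le_iff mult_le_cancel_left) simp
    finally show "1/6 * real n powr 1.5 \<le> real m" unfolding powr15 by simp
  qed
qed

theorem theorem2:
  shows "(\<forall>n\<ge>1. \<forall>C\<in>SS n. \<exists>m Sq. m \<le> (\<Sum>w\<in>C. length w - 1) \<and> good_seq n C m Sq)
    \<and> (\<exists>c::real. c > 0 \<and> (\<exists>N. \<forall>n\<ge>N. \<exists>B\<in>SS n.
          \<forall>m Sq. good_seq n B m Sq \<longrightarrow> c * real n powr 1.5 \<le> real m))"
  using part1 part2 by blast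

end
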